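(* For every $j\in[n-1]$, the geometric crystal operator $\bar e_j^c$ on $\mathrm{GT}_n^{\le m}$ preserves shape: $\mathrm{sh}(\bar e_j^c(\mathbf{z}))=\mathrm{sh}(\mathbf{z})$ as rational functions of $\mathbf{z}$ and $c$.
   Context: $\mathrm{GT}_n^{\le m}$ is the torus of arrays $\mathbf{z}=(z_{i,j})$, $z_{i,j}\in\mathbb{C}^*$, $1\le i\le m$, $i\le j\le n$; $p=\min(m,n)$ and $\mathrm{sh}(\mathbf{z})=(z_{1,n},\dots,z_{p,n})$. $E_{a,b}$ is a matrix unit, $x_j(a)=I+aE_{j,j+1}$, and $\Delta_I(A)$ is the minor of an $n\times n$ matrix $A$ with rows $I$ and columns $[1,|I|]$ ($\Delta_\emptyset=1$). $W^i(y_i,\dots,y_n)=\sum_{k<i}E_{kk}+\sum_{k\ge i}y_kE_{kk}+\sum_{k=i}^{n-1}E_{k+1,k}$; $\Phi(\mathbf{z})=W^p(z_{p,p},\frac{z_{p,p+1}}{z_{p,p}},\dots,\frac{z_{p,n}}{z_{p,n-1}})\cdots W^1(z_{1,1},\frac{z_{1,2}}{z_{1,1}},\dots,\frac{z_{1,n}}{z_{1,n-1}})$; $\Psi(A)=(\Delta_{[i,j]}(A)/\Delta_{[i+1,j]}(A))_{1\le i\le m,\,i\le j\le n}$. With $A=\Phi(\mathbf{z})$: $\bar\varepsilon_j(\mathbf{z})=A_{j+1,j+1}/A_{j+1,j}$, $\bar\varphi_j(\mathbf{z})=A_{j,j}/A_{j+1,j}$, and $\bar e_j^c(\mathbf{z})=\Psi\big(x_j((c-1)\bar\varphi_j(\mathbf{z}))\,A\,x_j((c^{-1}-1)\bar\varepsilon_j(\mathbf{z}))\big)$.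 *)

theory Defs
  imports Complex_Main "Jordan_Normal_Form.Determinant" "Jordan_Normal_Form.DL_Submatrix"
begin

(* Conventions: matrices are n x n JNF matrices (0-based internally);
   all mathematical indices below are 1-based as in the paper,
   entry (k,l) of the paper is  A $$ (k-1, l-1). *)

definition GT :: "nat \<Rightarrow> nat \<Rightarrow> (nat \<Rightarrow> nat \<Rightarrow> complex) \<Rightarrow> bool" where
  "GT n m z \<longleftrightarrow> (\<forall>i j. 1 \<le> i \<and> i \<le> m \<and> i \<le> j \<and> j \<le> n \<longrightarrow> z i j \<noteq> 0)"

definition Eunit :: "nat \<Rightarrow> nat \<Rightarrow> nat \<Rightarrow> complex mat" where
  "Eunit n a b = mat n n (\<lambda>(r,s). if r + 1 = a \<and> s + 1 = b then 1 else 0)"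

definition xmat :: "nat \<Rightarrow> nat \<Rightarrow> complex \<Rightarrow> complex mat" where
  "xmat n j a = 1\<^sub>m n + a \<cdot>\<^sub>m Eunit n j (j + 1)"

definition Wmat :: "nat \<Rightarrow> nat \<Rightarrow> (nat \<Rightarrow> complex) \<Rightarrow> complex mat" where
  "Wmat n i y = mat n n (\<lambda>(r,s). let k = r + 1; l = s + 1 in
      (if k = l then (if k < i then 1 else y k)
       else if k = l + 1 \<and> i \<le> l \<and> l \<le> n - 1 then 1 else 0))"

definition Wargs :: "(nat \<Rightarrow> nat \<Rightarrow> complex) \<Rightarrow> nat \<Rightarrow> nat \<Rightarrow> complex" where
  "Wargs z i k = (if k = i then z i i else z i k / z i (k - 1))"

fun Phi_aux :: "nat \<Rightarrow> (nat \<Rightarrow> nat \<Rightarrow> complex) \<Rightarrow> nat \<Rightarrow> complex mat" where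
  "Phi_aux n z 0 = 1\<^sub>m n"
| "Phi_aux n z (Suc k) = Wmat n (Suc k) (Wargs z (Suc k)) * Phi_aux n z k"

definition Phi :: "nat \<Rightarrow> nat \<Rightarrow> (nat \<Rightarrow> nat \<Rightarrow> complex) \<Rightarrow> complex mat" where
  "Phi n m z = Phi_aux n z (min m n)"

(* Delta_I(A): minor with rows I (1-based) and columns [1,|I|]; Delta_{} = 1 *)
definition minor :: "complex mat \<Rightarrow> nat set \<Rightarrow> complex" where
  "minor A I = det (submatrix A ((\<lambda>r. r - 1) ` I) {0..<card I})"

definition Psi :: "complex mat \<Rightarrow> nat \<Rightarrow> nat \<Rightarrow> complex" where
  "Psi A i j = minor A {i..j} / minor A {i+1..j}"

definition epsbar :: "nat \<Rightarrow> nat \<Rightarrow> nat \<Rightarrow> (nat \<Rightarrow> nat \<Rightarrow> complex) \<Rightarrow> complex" where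
  "epsbar n m j z = (let A = Phi n m z in A $$ (j, j) / A $$ (j, j - 1))"

definition phibar :: "nat \<Rightarrow> nat \<Rightarrow> nat \<Rightarrow> (nat \<Rightarrow> nat \<Rightarrow> complex) \<Rightarrow> complex" where
  "phibar n m j z = (let A = Phi n m z in A $$ (j - 1, j - 1) / A $$ (j, j - 1))"

definition ebar_mat :: "nat \<Rightarrow> nat \<Rightarrow> nat \<Rightarrow> complex \<Rightarrow> (nat \<Rightarrow> nat \<Rightarrow> complex) \<Rightarrow> complex mat" where
  "ebar_mat n m j c z = xmat n j ((c - 1) * phibar n m j z) * Phi n m z
                        * xmat n j ((inverse c - 1) * epsbar n m j z)"

(* geometric crystal operator \bar e_j^c; result array (restricted to 1<=i<=m, i<=j<=n) *)
definition ebar :: "nat \<Rightarrow> nat \<Rightarrow> nat \<Rightarrow> complex \<Rightarrow> (nat \<Rightarrow> nat \<Rightarrow> complex) \<Rightarrow> nat \<Rightarrow> nat \<Rightarrow> complex" where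
  "ebar n m j c z = Psi (ebar_mat n m j c z)"

definition sh :: "nat \<Rightarrow> nat \<Rightarrow> (nat \<Rightarrow> nat \<Rightarrow> complex) \<Rightarrow> complex list" where
  "sh n m z = map (\<lambda>i. z i n) [1..<min m n + 1]"

end

theory Submission
  imports Defs
begin

definition blk :: "complex mat \<Rightarrow> nat \<Rightarrow> nat \<Rightarrow> nat \<Rightarrow> complex mat" where
  "blk A r0 c0 s = mat s s (\<lambda>(u,v). A $$ (r0+u, c0+v))"

lemma pick_interval: "a + k < b \<Longrightarrow> pick {a..<b} k = a + k"
proof (induction k)
  case 0
  then show ?case by (auto intro!: Least_equality)
next
  case (Suc k)
  then show ?case by (auto intro!: Least_equality)
qed

lemma minor_blk:
  assumes A: "A \<in> carrier_mat n n" and i: "1 \<le> i" "i \<le> n + 1"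
  shows "minor A {i..n} = det (blk A (i-1) 0 (n+1-i))"
proof -
  have cI: "card {i..n} = n+1-i" by simp
  have img: "(\<lambda>r. r - 1) ` {i..n} = {i-1..<n}"
  proof
    show "(\<lambda>r. r - 1) ` {i..n} \<subseteq> {i-1..<n}" using i by auto
    show "{i-1..<n} \<subseteq> (\<lambda>r. r - 1) ` {i..n}"
    proof
      fix x assume "x \<in> {i-1..<n}"
      then have "x = (x+1) - 1" "x+1 \<in> {i..n}" using i by auto
      then show "x \<in> (\<lambda>r. r - 1) ` {i..n}" by blast
    qed
  qed
  have r: "{r. r < dim_row A \<and> r \<in> {i-1..<n}} = {i-1..<n}" using A by auto
  have c: "{r. r < dim_col A \<and> r \<in> {0..<n+1-i}} = {0..<n+1-i}" using A i by auto
  have "submatrix A ((\<lambda>r. r - 1) ` {i..n}) {0..<card {i..n}} = blk A (i-1) 0 (n+1-i)"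
    unfolding img cI submatrix_def blk_def r c
    by (rule eq_matI) (use i in \<open>auto simp: pick_interval\<close>)
  then show ?thesis unfolding minor_def by simp
qed

lemma det_unit_upper:
  assumes T: "T \<in> carrier_mat s s" and ut: "\<And>u w. w < u \<Longrightarrow> u < s \<Longrightarrow> T $$ (u,w) = 0"
    and d: "\<And>u. u < s \<Longrightarrow> T $$ (u,u) = 1"
  shows "det T = 1"
proof -
  have "upper_triangular T" using T ut by (auto simp: upper_triangular_def)
  then have "det T = prod_list (diag_mat T)" using det_upper_triangular T by blast
  also have "\<dots> = 1" unfolding prod_list_diag_prod using T d by simp
  finally show ?thesis .
qed

lemma det_mult_unit_left:
  assumes T: "T \<in> carrier_mat s s" and ut: "\<And>u w. w < u \<Longrightarrow> u < s \<Longrightarrow> T $$ (u,w) = 0"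
    and d: "\<And>u. u < s \<Longrightarrow> T $$ (u,u) = 1" and B: "B \<in> carrier_mat s s"
  shows "det (T * B) = det B" "det (B * T) = det B"
  using det_mult[OF T B] det_mult[OF B T] det_unit_upper[OF T ut d] by auto

lemma mult_entry:
  assumes "A \<in> carrier_mat n k" "B \<in> carrier_mat k l" "i < n" "j < l"
  shows "(A * B) $$ (i,j) = (\<Sum>q<k. A $$ (i,q) * B $$ (q,j))"
  using assms by (auto simp: scalar_prod_def lessThan_atLeast0 intro!: sum.cong)

lemma W_carrier[simp]: "Wmat n i y \<in> carrier_mat n n"
  by (simp add: Wmat_def)

lemma W_entry: "r < n \<Longrightarrow> s < n \<Longrightarrow> Wmat n i y $$ (r,s) =
   (if r = s then (if r + 1 < i then 1 else y (r+1))
    else if r = s + 1 \<and> i \<le> s + 1 \<and> s + 1 \<le> n - 1 then 1 else 0)"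
  by (simp add: Wmat_def Let_def)

lemma x_carrier[simp]: "xmat n j a \<in> carrier_mat n n"
  by (simp add: xmat_def Eunit_def)

lemma x_entry: "r < n \<Longrightarrow> s < n \<Longrightarrow> xmat n j a $$ (r,s) =
   (if r = s then 1 else 0) + (if r + 1 = j \<and> s = j then a else 0)"
  by (auto simp: xmat_def Eunit_def)

lemma blk_left:
  assumes A: "A \<in> carrier_mat n n" and j: "1 \<le> j" "j < n" and rs: "r0 + s = n"
  shows "det (blk (xmat n j a * A) r0 0 s) = det (blk A r0 0 s)"
proof -
  define L where "L = mat s s (\<lambda>(u,w). (if u = w then 1 else 0) + (if r0+u+1 = j \<and> r0+w = j then a else 0))"
  have "blk (xmat n j a * A) r0 0 s = L * blk A r0 0 s"
  proof (rule eq_matI)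
    fix u v assume uv: "u < dim_row (L * blk A r0 0 s)" "v < dim_col (L * blk A r0 0 s)"
    then have u: "u < s" and v: "v < s" by (auto simp: L_def blk_def)
    have "(xmat n j a * A) $$ (r0+u, v) = (\<Sum>q<n. xmat n j a $$ (r0+u,q) * A $$ (q,v))"
      using mult_entry[OF x_carrier A] u v rs by auto
    also have "\<dots> = (\<Sum>q<n. (if r0+u = q then A $$ (q,v) else 0) + (if r0+u+1 = j \<and> q = j then a * A $$ (q,v) else 0))"
      using rs u by (intro sum.cong) (auto simp: x_entry distrib_right)
    also have "\<dots> = A $$ (r0+u, v) + (if r0+u+1 = j then a * A $$ (j,v) else 0)"
      using rs u j by (simp add: sum.distrib)
    finally have 1: "(xmat n j a * A) $$ (r0+u, v) = A $$ (r0+u, v) + (if r0+u+1 = j then a * A $$ (j,v) else 0)" .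
    have "(L * blk A r0 0 s) $$ (u,v) = (\<Sum>w<s. L $$ (u,w) * blk A r0 0 s $$ (w,v))"
      using mult_entry[of L s s "blk A r0 0 s" s] u v by (auto simp: L_def blk_def)
    also have "\<dots> = (\<Sum>w<s. (if u = w then A $$ (r0+w,v) else 0) + (if r0+u+1 = j \<and> w = j - r0 then a * A $$ (r0+w,v) else 0))"
      using u v by (intro sum.cong) (auto simp: L_def blk_def distrib_right)
    also have "\<dots> = A $$ (r0+u, v) + (if r0+u+1 = j then a * A $$ (j,v) else 0)"
      using rs u j by (auto simp add: sum.distrib)
    finally show "blk (xmat n j a * A) r0 0 s $$ (u, v) = (L * blk A r0 0 s) $$ (u, v)"
      using 1 u v by (simp add: blk_def)
  qed (auto simp: L_def blk_def)
  moreover have "det (L * blk A r0 0 s) = det (blk A r0 0 s)"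
    by (rule det_mult_unit_left(1)) (auto simp: L_def blk_def)
  ultimately show ?thesis by simp
qed

lemma blk_right:
  assumes A: "A \<in> carrier_mat n n" and j: "1 \<le> j" "j < n" and rs: "r0 + s = n"
  shows "det (blk (A * xmat n j a) r0 0 s) = det (blk A r0 0 s)"
proof -
  define R where "R = mat s s (\<lambda>(w,v). (if w = v then 1 else 0) + (if w+1 = j \<and> v = j then a else 0))"
  have "blk (A * xmat n j a) r0 0 s = blk A r0 0 s * R"
  proof (rule eq_matI)
    fix u v assume uv: "u < dim_row (blk A r0 0 s * R)" "v < dim_col (blk A r0 0 s * R)"
    then have u: "u < s" and v: "v < s" by (auto simp: R_def blk_def)
    have "(A * xmat n j a) $$ (r0+u, v) = (\<Sum>q<n. A $$ (r0+u,q) * xmat n j a $$ (q,v))"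
      using mult_entry[OF A x_carrier] u v rs by auto
    also have "\<dots> = (\<Sum>q<n. (if q = v then A $$ (r0+u,q) else 0) + (if q = j - 1 \<and> v = j then a * A $$ (r0+u,q) else 0))"
      using rs u v j by (intro sum.cong) (auto simp: x_entry distrib_left)
    also have "\<dots> = A $$ (r0+u, v) + (if v = j then a * A $$ (r0+u,j-1) else 0)"
      using rs u v j by (auto simp add: sum.distrib)
    finally have 1: "(A * xmat n j a) $$ (r0+u, v) = A $$ (r0+u, v) + (if v = j then a * A $$ (r0+u,j-1) else 0)" .
    have "(blk A r0 0 s * R) $$ (u,v) = (\<Sum>w<s. blk A r0 0 s $$ (u,w) * R $$ (w,v))"
      using mult_entry[of "blk A r0 0 s" s s R s] u v by (auto simp: R_def blk_def)
    also have "\<dots> = (\<Sum>w<s. (if w = v then A $$ (r0+u,w) else 0) + (if w = j - 1 \<and> v = j then a * A $$ (r0+u,w) else 0))"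
      using u v j by (intro sum.cong) (auto simp: R_def blk_def distrib_left)
    also have "\<dots> = A $$ (r0+u, v) + (if v = j then a * A $$ (r0+u,j-1) else 0)"
      using rs u v j by (auto simp add: sum.distrib)
    finally show "blk (A * xmat n j a) r0 0 s $$ (u, v) = (blk A r0 0 s * R) $$ (u, v)"
      using 1 u v by (simp add: blk_def)
  qed (auto simp: R_def blk_def)
  moreover have "det (blk A r0 0 s * R) = det (blk A r0 0 s)"
    by (rule det_mult_unit_left(2)) (auto simp: R_def blk_def)
  ultimately show ?thesis by simp
qed

fun Qm :: "nat \<Rightarrow> (nat \<Rightarrow> nat \<Rightarrow> complex) \<Rightarrow> nat \<Rightarrow> nat \<Rightarrow> complex mat" where
  "Qm n z a 0 = 1\<^sub>m n"
| "Qm n z a (Suc k) = Wmat n (a+k) (Wargs z (a+k)) * Qm n z a k"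

lemma Qm_carrier[simp]: "Qm n z a k \<in> carrier_mat n n"
  by (induction k) (auto intro!: mult_carrier_mat[of _ n n _ n])

lemma Phi_Qm: "Phi_aux n z k = Qm n z 1 k"
  by (induction k) auto

lemma Qm_peel: "Qm n z a (Suc k) = Qm n z (Suc a) k * Wmat n a (Wargs z a)"
proof (induction k)
  case 0
  have "Wmat n a (Wargs z a) * 1\<^sub>m n = 1\<^sub>m n * Wmat n a (Wargs z a)"
    using right_mult_one_mat left_mult_one_mat W_carrier by metis
  then show ?case by simp
next
  case (Suc k)
  have "Qm n z a (Suc (Suc k)) = Wmat n (a+Suc k) (Wargs z (a+Suc k)) * (Qm n z (Suc a) k * Wmat n a (Wargs z a))"
    using Suc by simp
  also have "\<dots> = (Wmat n (a+Suc k) (Wargs z (a+Suc k)) * Qm n z (Suc a) k) * Wmat n a (Wargs z a)"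
    by (rule assoc_mult_mat[symmetric, of _ n n _ n _ n]) auto
  also have "\<dots> = Qm n z (Suc a) (Suc k) * Wmat n a (Wargs z a)" by simp
  finally show ?case .
qed

lemma Qm_lower: "r < n \<Longrightarrow> c < n \<Longrightarrow> r < c \<Longrightarrow> Qm n z a k $$ (r,c) = 0"
proof (induction k arbitrary: r c)
  case 0
  then show ?case by simp
next
  case (Suc k)
  have "Qm n z a (Suc k) $$ (r,c) = (\<Sum>q<n. Wmat n (a+k) (Wargs z (a+k)) $$ (r,q) * Qm n z a k $$ (q,c))"
    using Suc.prems by (simp add: mult_entry[OF W_carrier Qm_carrier])
  also have "\<dots> = (\<Sum>q<n. 0)"
  proof (rule sum.cong)
    fix q assume q: "q \<in> {..<n}"
    show "Wmat n (a+k) (Wargs z (a+k)) $$ (r,q) * Qm n z a k $$ (q,c) = 0"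
    proof (cases "q \<le> r")
      case True
      then show ?thesis using Suc q by auto
    next
      case False
      then show ?thesis using Suc q by (auto simp: W_entry)
    qed
  qed simp
  finally show ?case by simp
qed

lemma Qm_diag: "r < n \<Longrightarrow> Qm n z a k $$ (r,r) = (\<Prod>k'\<in>{a..<a+k}. if r+1 < k' then 1 else Wargs z k' (r+1))"
proof (induction k)
  case 0
  then show ?case by simp
next
  case (Suc k)
  have "Qm n z a (Suc k) $$ (r,r) = (\<Sum>q<n. Wmat n (a+k) (Wargs z (a+k)) $$ (r,q) * Qm n z a k $$ (q,r))"
    using Suc.prems by (simp add: mult_entry[OF W_carrier Qm_carrier])
  also have "\<dots> = (\<Sum>q<n. if q = r then Wmat n (a+k) (Wargs z (a+k)) $$ (r,r) * Qm n z a k $$ (r,r) else 0)"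
  proof (rule sum.cong)
    fix q assume q: "q \<in> {..<n}"
    show "Wmat n (a+k) (Wargs z (a+k)) $$ (r,q) * Qm n z a k $$ (q,r) = (if q = r then Wmat n (a+k) (Wargs z (a+k)) $$ (r,r) * Qm n z a k $$ (r,r) else 0)"
    proof (cases "q < r")
      case True
      then show ?thesis using Suc q by (auto simp: Qm_lower)
    next
      case False
      then show ?thesis using Suc q by (auto simp: W_entry)
    qed
  qed simp
  also have "\<dots> = Wmat n (a+k) (Wargs z (a+k)) $$ (r,r) * Qm n z a k $$ (r,r)"
    using Suc.prems by simp
  also have "\<dots> = (\<Prod>k'\<in>{a..<a+Suc k}. if r+1 < k' then 1 else Wargs z k' (r+1))"
    using Suc by (simp add: W_entry mult.commute)
  finally show ?case .
qed

lemma Qm_col: "c + 1 < a \<Longrightarrow> r < n \<Longrightarrow> c < n \<Longrightarrow> Qm n z a k $$ (r,c) = (if r = c then 1 else 0)"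
proof (induction k arbitrary: r)
  case 0
  then show ?case by simp
next
  case (Suc k)
  have "Qm n z a (Suc k) $$ (r,c) = (\<Sum>q<n. Wmat n (a+k) (Wargs z (a+k)) $$ (r,q) * Qm n z a k $$ (q,c))"
    using Suc.prems by (simp add: mult_entry[OF W_carrier Qm_carrier])
  also have "\<dots> = (\<Sum>q<n. if q = c then Wmat n (a+k) (Wargs z (a+k)) $$ (r,c) else 0)"
    using Suc by (intro sum.cong) auto
  also have "\<dots> = (if r = c then 1 else 0)"
    using Suc.prems by (auto simp: W_entry)
  finally show ?case .
qed

lemma telescope:
  assumes "k \<le> n" and nz: "\<And>l. k \<le> l \<Longrightarrow> l \<le> n \<Longrightarrow> z k l \<noteq> 0"
  shows "(\<Prod>l\<in>{k..n}. Wargs z k l) = z k n"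
  using assms
proof (induction n rule: dec_induct)
  case base
  then show ?case by (simp add: Wargs_def)
next
  case (step n)
  have "{k..Suc n} = insert (Suc n) {k..n}" using step by auto
  then have "(\<Prod>l\<in>{k..Suc n}. Wargs z k l) = Wargs z k (Suc n) * z k n"
    using step by simp
  also have "\<dots> = z k (Suc n)" using step.prems step.hyps by (simp add: Wargs_def)
  finally show ?case .
qed

lemma inner_prod:
  fixes a k' n :: nat
  assumes "a \<le> k'" "k' \<le> n"
  shows "(\<Prod>u<n+1-a. if a+u < k' then 1 else g (a+u)) = (\<Prod>l\<in>{k'..n}. (g l :: complex))"
proof -
  have "(\<Prod>u<n+1-a. if a+u < k' then 1 else g (a+u)) = (\<Prod>u\<in>{0..<n+1-a}. (\<lambda>l. if l < k' then 1 else g l) (u+a))"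
    unfolding lessThan_atLeast0 by (intro prod.cong refl) (simp add: add.commute)
  also have "\<dots> = (\<Prod>l\<in>{0+a..<(n+1-a)+a}. if l < k' then 1 else g l)"
    by (rule prod.shift_bounds_nat_ivl[symmetric])
  also have "\<dots> = (\<Prod>l\<in>{a..<n+1}. if l < k' then 1 else g l)" using assms by simp
  also have "\<dots> = (\<Prod>l\<in>{a..<k'}. if l < k' then 1 else g l) * (\<Prod>l\<in>{k'..<n+1}. if l < k' then 1 else g l)"
    using assms by (intro prod.atLeastLessThan_concat[symmetric]) auto
  also have "\<dots> = (\<Prod>l\<in>{k'..<n+1}. g l)"
    by (simp add: prod.neutral)
  also have "{k'..<n+1} = {k'..n}" by auto
  finally show ?thesis .
qed

lemma diag_det:
  assumes a: "1 \<le> a" "a + k \<le> n + 1"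
    and nz: "\<And>k' l. a \<le> k' \<Longrightarrow> k' < a + k \<Longrightarrow> k' \<le> l \<Longrightarrow> l \<le> n \<Longrightarrow> z k' l \<noteq> 0"
  shows "det (blk (Qm n z a k) (a-1) (a-1) (n+1-a)) = (\<Prod>k'\<in>{a..<a+k}. z k' n)"
proof -
  let ?B = "blk (Qm n z a k) (a-1) (a-1) (n+1-a)"
  have "det ?B = prod_list (diag_mat ?B)"
    by (rule det_lower_triangular[of "n+1-a"]) (use a in \<open>auto simp: blk_def Qm_lower\<close>)
  also have "\<dots> = (\<Prod>u<n+1-a. Qm n z a k $$ (a-1+u, a-1+u))"
    unfolding prod_list_diag_prod by (simp add: blk_def lessThan_atLeast0)
  also have "\<dots> = (\<Prod>u<n+1-a. \<Prod>k'\<in>{a..<a+k}. if a+u < k' then 1 else Wargs z k' (a+u))"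
  proof (rule prod.cong[OF refl])
    fix u assume u: "u \<in> {..<n+1-a}"
    have e: "a-1+u+1 = a+u" using a by simp
    show "Qm n z a k $$ (a-1+u, a-1+u) = (\<Prod>k'\<in>{a..<a+k}. if a+u < k' then 1 else Wargs z k' (a+u))"
      using u a by (subst Qm_diag) (auto simp only: e)
  qed
  also have "\<dots> = (\<Prod>k'\<in>{a..<a+k}. \<Prod>u<n+1-a. if a+u < k' then 1 else Wargs z k' (a+u))"
    by (rule prod.swap)
  also have "\<dots> = (\<Prod>k'\<in>{a..<a+k}. z k' n)"
  proof (rule prod.cong[OF refl])
    fix k' assume k': "k' \<in> {a..<a+k}"
    have "(\<Prod>u<n+1-a. if a+u < k' then 1 else Wargs z k' (a+u)) = (\<Prod>l\<in>{k'..n}. Wargs z k' l)"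
      using k' a by (intro inner_prod) auto
    also have "\<dots> = z k' n" using k' a nz by (intro telescope) auto
    finally show "(\<Prod>u<n+1-a. if a+u < k' then 1 else Wargs z k' (a+u)) = z k' n" .
  qed
  finally show ?thesis .
qed

lemma blk_peel0:
  assumes a: "1 \<le> a" "a < i" "i \<le> n"
  shows "det (blk (Qm n z a (Suc k)) (i-1) (a-1) (n+1-i)) = det (blk (Qm n z (Suc a) k) (i-1) a (n+1-i))"
proof -
  let ?s = "n+1-i"
  let ?Q = "Qm n z (Suc a) k"
  let ?y = "Wargs z a"
  define U where "U = mat ?s ?s (\<lambda>(w,v). (if w = v then 1 else 0) + (if w+1 = v then ?y (a+v) else 0))"
  have "blk (Qm n z a (Suc k)) (i-1) (a-1) ?s = blk ?Q (i-1) a ?s * U"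
  proof (rule eq_matI)
    fix u v assume uv: "u < dim_row (blk ?Q (i-1) a ?s * U)" "v < dim_col (blk ?Q (i-1) a ?s * U)"
    then have u: "u < ?s" and v: "v < ?s" by (auto simp: U_def blk_def)
    have "Qm n z a (Suc k) $$ (i-1+u, a-1+v) = (?Q * Wmat n a ?y) $$ (i-1+u, a-1+v)"
      by (simp only: Qm_peel)
    also have "\<dots> = (\<Sum>q<n. ?Q $$ (i-1+u,q) * Wmat n a ?y $$ (q, a-1+v))"
      by (rule mult_entry[OF Qm_carrier W_carrier]) (use u v a in auto)
    also have "\<dots> = (\<Sum>q<n. (if q = a-1+v then ?Q $$ (i-1+u,q) * ?y (a+v) else 0) + (if q = a+v then ?Q $$ (i-1+u,q) else 0))"
      using u v a by (intro sum.cong refl) (auto simp: W_entry)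
    also have "\<dots> = ?Q $$ (i-1+u,a-1+v) * ?y (a+v) + ?Q $$ (i-1+u,a+v)"
    proof -
      have "a-1+v < n" "a+v < n" using u v a by auto
      then show ?thesis by (simp only: sum.distrib sum.delta finite_lessThan lessThan_iff if_True)
    qed
    finally have 1: "Qm n z a (Suc k) $$ (i-1+u, a-1+v) = ?Q $$ (i-1+u,a-1+v) * ?y (a+v) + ?Q $$ (i-1+u,a+v)" .
    have "(blk ?Q (i-1) a ?s * U) $$ (u,v) = (\<Sum>w<?s. blk ?Q (i-1) a ?s $$ (u,w) * U $$ (w,v))"
      using mult_entry[of "blk ?Q (i-1) a ?s" ?s ?s U ?s] u v by (auto simp: U_def blk_def)
    also have "\<dots> = (\<Sum>w<?s. (if w = v then ?Q $$ (i-1+u, a+w) else 0) + (if w = v - 1 then (if 1 \<le> v then ?Q $$ (i-1+u,a+w) * ?y (a+v) else 0) else 0))"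
      using u v by (intro sum.cong refl) (auto simp: U_def blk_def distrib_left)
    also have "\<dots> = ?Q $$ (i-1+u, a+v) + (if 1 \<le> v then ?Q $$ (i-1+u,a+(v-1)) * ?y (a+v) else 0)"
    proof -
      have "v - 1 < ?s" using v by linarith
      then show ?thesis using u v by (simp only: sum.distrib sum.delta finite_lessThan lessThan_iff if_True)
    qed
    also have "\<dots> = ?Q $$ (i-1+u,a-1+v) * ?y (a+v) + ?Q $$ (i-1+u,a+v)"
    proof (cases "v = 0")
      case True
      have "?Q $$ (i-1+u, a-1) = 0" using Qm_col[of "a-1" "Suc a" "i-1+u" n z k] a u by auto
      then show ?thesis using True by simp
    next
      case False
      then have e: "a+(v-1) = a-1+v" and v1: "1 \<le> v" using a by auto
      show ?thesis by (simp only: e v1 if_True add.commute)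
    qed
    finally show "blk (Qm n z a (Suc k)) (i-1) (a-1) ?s $$ (u, v) = (blk ?Q (i-1) a ?s * U) $$ (u, v)"
      using 1 u v by (simp add: blk_def)
  qed (auto simp: U_def blk_def)
  moreover have "det (blk ?Q (i-1) a ?s * U) = det (blk ?Q (i-1) a ?s)"
    by (rule det_mult_unit_left(2)) (auto simp: U_def blk_def)
  ultimately show ?thesis by simp
qed

lemma blk_peel:
  assumes a: "1 \<le> a" "a < i" "i \<le> n + 1"
  shows "det (blk (Qm n z a (Suc k)) (i-1) (a-1) (n+1-i)) = det (blk (Qm n z (Suc a) k) (i-1) (Suc a - 1) (n+1-i))"
proof (cases "i = n + 1")
  case True
  then show ?thesis by (simp add: blk_def)
next
  case False
  then show ?thesis using blk_peel0[of a i n z k] a by simp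
qed

lemma minor_Q:
  assumes "1 \<le> a" "a \<le> i" "i \<le> a + k" "a + k \<le> n + 1"
    and nz: "\<And>k' l. a \<le> k' \<Longrightarrow> k' < a + k \<Longrightarrow> k' \<le> l \<Longrightarrow> l \<le> n \<Longrightarrow> z k' l \<noteq> 0"
  shows "det (blk (Qm n z a k) (i-1) (a-1) (n+1-i)) = (\<Prod>k'\<in>{i..<a+k}. z k' n)"
  using assms
proof (induction k arbitrary: a)
  case 0
  then have "i = a" by simp
  then show ?case using diag_det[of a 0 n z] 0 by simp
next
  case (Suc k)
  show ?case
  proof (cases "i = a")
    case True
    then show ?thesis using diag_det[of a "Suc k" n z] Suc.prems by simp
  next
    case False
    have "det (blk (Qm n z a (Suc k)) (i-1) (a-1) (n+1-i)) = det (blk (Qm n z (Suc a) k) (i-1) (Suc a - 1) (n+1-i))"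
      by (rule blk_peel) (use Suc.prems False in auto)
    also have "\<dots> = (\<Prod>k'\<in>{i..<Suc a+k}. z k' n)"
      using Suc.prems False by (intro Suc.IH) auto
    finally show ?thesis by simp
  qed
qed

lemma minor_B:
  assumes j: "1 \<le> j" "j \<le> n - 1" and GT: "GT n m z" and i: "1 \<le> i" "i \<le> min m n + 1"
  shows "minor (ebar_mat n m j c z) {i..n} = (\<Prod>k\<in>{i..<min m n + 1}. z k n)"
proof -
  let ?p = "min m n"
  let ?A = "Phi n m z"
  let ?X = "xmat n j ((c - 1) * phibar n m j z)"
  let ?Y = "xmat n j ((inverse c - 1) * epsbar n m j z)"
  have A: "?A \<in> carrier_mat n n" by (simp add: Phi_def Phi_Qm)
  have XA: "?X * ?A \<in> carrier_mat n n" using mult_carrier_mat[OF x_carrier A] by simp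
  have jn: "j < n" using j by simp
  have i2: "i \<le> n + 1" using i by simp
  have B: "ebar_mat n m j c z \<in> carrier_mat n n" unfolding ebar_mat_def using XA by simp
  have "minor (ebar_mat n m j c z) {i..n} = det (blk (?X * ?A * ?Y) (i-1) 0 (n+1-i))"
    using minor_blk[OF B i(1) i2] by (simp add: ebar_mat_def)
  also have "\<dots> = det (blk (?X * ?A) (i-1) 0 (n+1-i))"
    by (rule blk_right[OF XA j(1) jn]) (use i2 i in simp)
  also have "\<dots> = det (blk ?A (i-1) 0 (n+1-i))"
    by (rule blk_left[OF A j(1) jn]) (use i2 i in simp)
  also have "\<dots> = det (blk (Qm n z 1 ?p) (i-1) (1-1) (n+1-i))"
    by (simp add: Phi_def Phi_Qm)
  also have "\<dots> = (\<Prod>k\<in>{i..<1+?p}. z k n)"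
    by (rule minor_Q) (use i GT in \<open>auto simp: GT_def\<close>)
  finally show ?thesis by simp
qed

theorem lemma3p6:
  fixes n m j :: nat and z :: "nat \<Rightarrow> nat \<Rightarrow> complex" and c :: complex
  assumes "1 \<le> j" and "j \<le> n - 1"
    and "GT n m z"
    and "c \<noteq> 0"
    and "Phi n m z $$ (j, j - 1) \<noteq> 0"
    and "\<forall>i \<in> {1..min m n}. minor (ebar_mat n m j c z) {i+1..n} \<noteq> 0"
  shows "sh n m (ebar n m j c z) = sh n m z"
  unfolding sh_def
proof (rule map_cong[OF refl])
  fix i assume "i \<in> set [1..<min m n + 1]"
  then have i: "1 \<le> i" "i \<le> min m n" by auto
  have nz: "(\<Prod>k\<in>{Suc i..<min m n + 1}. z k n) \<noteq> 0"
  proof -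
    have "\<forall>k\<in>{Suc i..<min m n + 1}. z k n \<noteq> 0"
    proof
      fix k assume "k \<in> {Suc i..<min m n + 1}"
      then have "1 \<le> k" "k \<le> m" "k \<le> n" by auto
      then show "z k n \<noteq> 0" using assms(3) by (auto simp: GT_def)
    qed
    then show ?thesis by (simp only: prod_zero_iff[OF finite_atLeastLessThan]) blast
  qed
  have "ebar n m j c z i n = (\<Prod>k\<in>{i..<min m n + 1}. z k n) / (\<Prod>k\<in>{Suc i..<min m n + 1}. z k n)"
  proof -
    have "minor (ebar_mat n m j c z) {i..n} = (\<Prod>k\<in>{i..<min m n + 1}. z k n)"
      by (rule minor_B[OF assms(1,2,3)]) (use i in auto)
    moreover have "minor (ebar_mat n m j c z) {i+1..n} = (\<Prod>k\<in>{i+1..<min m n + 1}. z k n)"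
      by (rule minor_B[OF assms(1,2,3)]) (use i in auto)
    ultimately show ?thesis by (simp only: ebar_def Psi_def Suc_eq_plus1)
  qed
  also have "(\<Prod>k\<in>{i..<min m n + 1}. z k n) = z i n * (\<Prod>k\<in>{Suc i..<min m n + 1}. z k n)"
    by (rule prod.atLeast_Suc_lessThan) (use i in linarith)
  finally show "ebar n m j c z i n = z i n" using nz by simp
qed

end
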